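(* Let $A$ be a finite additive poset, let $\mu:A\times A\to\mathbb{Z}$ be the Möbius function of its partial order, and let $\mathcal{A}\subset A$ be the set of atoms of $A$. Then every $a\in A$ satisfies $a=\sum_{b\in\mathcal{A}}\mu(b,a)\,b$ (integer coefficients acting on the $\mathbb{Z}/2\mathbb{Z}$-vector space $A$).
   Context: An additive poset is a pair $(A,\le)$ where $A$ is an abelian group and $\le$ is a partial order on $A$ such that for all $a,b,c\in A$: $(\ast)$ if $b\le a$ and $c\le a$ then $b+c\le a$; $(\ast\ast)$ if $a\le b$ and $a\le c$ then $a\le a+b+c$. Every element satisfies $a+a=0$. An atom is a nonzero $a$ whose tail $\{x:x\le a\}$ equals $\{0,a\}$. The Möbius function is determined by $\mu(a,a)=1$, $\mu(a,b)=0$ if $a\not\le b$, and $\sum_{a\le c\le b}\mu(a,c)=0$ if $a\le b$, $a\neq b$. *)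

theory Defs
  imports Main
begin

definition additive_poset :: "('a::ab_group_add \<Rightarrow> 'a \<Rightarrow> bool) \<Rightarrow> bool" where
  "additive_poset le \<longleftrightarrow>
     (\<forall>a. le a a) \<and>
     (\<forall>a b c. le a b \<longrightarrow> le b c \<longrightarrow> le a c) \<and>
     (\<forall>a b. le a b \<longrightarrow> le b a \<longrightarrow> a = b) \<and>
     (\<forall>a b c. le b a \<longrightarrow> le c a \<longrightarrow> le (b + c) a) \<and>
     (\<forall>a b c. le a b \<longrightarrow> le a c \<longrightarrow> le a (a + b + c))"

definition atom :: "('a::ab_group_add \<Rightarrow> 'a \<Rightarrow> bool) \<Rightarrow> 'a \<Rightarrow> bool" where
  "atom le a \<longleftrightarrow> a \<noteq> 0 \<and> {x. le x a} = {0, a}"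

text \<open>The defining equations of the Moebius function of the order \<open>le\<close>
  (they determine it uniquely on a finite poset).\<close>
definition is_moebius :: "('a \<Rightarrow> 'a \<Rightarrow> bool) \<Rightarrow> ('a \<Rightarrow> 'a \<Rightarrow> int) \<Rightarrow> bool" where
  "is_moebius le mu \<longleftrightarrow>
     (\<forall>a. mu a a = 1) \<and>
     (\<forall>a b. \<not> le a b \<longrightarrow> mu a b = 0) \<and>
     (\<forall>a b. le a b \<and> a \<noteq> b \<longrightarrow> (\<Sum>c\<in>{c. le a c \<and> le c b}. mu a c) = 0)"

definition int_smul :: "int \<Rightarrow> 'a::ab_group_add \<Rightarrow> 'a" where
  "int_smul k x = (if 0 \<le> k then (\<Sum>i<nat k. x) else - (\<Sum>i<nat (- k). x))"

end

theory Submission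
  imports Defs
begin

lemma pair_sum:
  fixes x :: "'a::ab_group_add"
  assumes ch: "\<forall>z::'a. z+z=0" and x0: "x \<noteq> 0"
  shows "finite S \<Longrightarrow> (\<forall>t\<in>S. t+x\<in>S) \<Longrightarrow> (\<Sum>t\<in>S. t) = (if even (card S div 2) then 0 else x)"
proof (induction "card S" arbitrary: S rule: less_induct)
  case less
  show ?case
  proof (cases "S = {}")
    case True then show ?thesis by simp
  next
    case False
    then obtain t where t: "t \<in> S" by blast
    have tx: "t + x \<in> S" using less t by blast
    have ne: "t + x \<noteq> t" using x0 by (metis add_cancel_left_right)
    define S' where "S' = S - {t, t+x}"
    have fin: "finite S'" using less S'_def by simp
    have cl: "\<forall>u\<in>S'. u+x\<in>S'"
    proof
      fix u assume u: "u \<in> S'"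
      have uS: "u + x \<in> S" using u less S'_def by blast
      have "u + x \<noteq> t"
      proof
        assume "u + x = t"
        then have "u = t + x" using ch by (metis add.assoc add.right_neutral)
        then show False using u S'_def by blast
      qed
      moreover have "u + x \<noteq> t + x" using u S'_def by auto
      ultimately show "u + x \<in> S'" using uS S'_def by blast
    qed
    have cS: "card S' = card S - 2" using S'_def t tx ne less(2)
      by (simp add: card_Diff_subset)
    have c2: "card S \<ge> 2"
    proof -
      have "{t, t+x} \<subseteq> S" using t tx by blast
      then have "card {t, t+x} \<le> card S" using less(2) card_mono by blast
      then show ?thesis using ne by simp
    qed
    have lt: "card S' < card S" using cS c2 by simp
    have IH: "(\<Sum>t\<in>S'. t) = (if even (card S' div 2) then 0 else x)"
      using less(1)[OF lt fin cl] .
    have "(\<Sum>t\<in>S. t) = (\<Sum>t\<in>{t, t+x}. t) + (\<Sum>t\<in>S'. t)"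
      unfolding S'_def using t tx less(2)
      using sum.subset_diff[of "{t, t+x}" S "\<lambda>t. t"] by (simp add: add.commute)
    also have "(\<Sum>t\<in>{t, t+x}. t) = x" using ne ch
      by (simp add: add.assoc[symmetric])
    finally have eq: "(\<Sum>t\<in>S. t) = x + (\<Sum>t\<in>S'. t)" .
    have d: "card S div 2 = card S' div 2 + 1" using cS c2 by simp
    show ?thesis using eq IH d ch by auto
  qed
qed

lemma nsum_char2:
  fixes x :: "'a::ab_group_add" and n :: nat
  assumes "x + x = 0"
  shows "(\<Sum>i<n. x) = (if even n then 0 else x)"
  using assms by (induction n rule: nat.induct) (auto simp: add.commute)

lemma int_smul_char2:
  fixes x :: "'a::ab_group_add"
  assumes h: "x + x = 0"
  shows "int_smul k x = (if even k then 0 else x)"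
proof -
  have mx: "- x = x" using h by (metis add_eq_0_iff)
  show ?thesis
  proof (cases "0 \<le> k")
    case True
    then have "even (nat k) \<longleftrightarrow> even k" by (simp add: even_nat_iff)
    then show ?thesis using True by (simp add: int_smul_def nsum_char2[OF h])
  next
    case False
    then have "even (nat (-k)) \<longleftrightarrow> even k" by (simp add: even_nat_iff)
    then show ?thesis using False mx by (simp add: int_smul_def nsum_char2[OF h])
  qed
qed

lemma int_smul_sum:
  fixes x :: "'a::ab_group_add"
  assumes h: "x + x = 0"
  shows "finite C \<Longrightarrow> int_smul (\<Sum>c\<in>C. f c) x = (\<Sum>c\<in>C. int_smul (f c) x)"
proof (induction C rule: finite_induct)
  case empty then show ?case by (simp add: int_smul_char2[OF h])
next
  case (insert c C)
  then show ?case using h by (auto simp: int_smul_char2[OF h])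
qed

theorem theorem6p1:
  fixes le :: "'a::{ab_group_add, finite} \<Rightarrow> 'a \<Rightarrow> bool"
    and mu :: "'a \<Rightarrow> 'a \<Rightarrow> int"
  assumes "additive_poset le"
    and "is_moebius le mu"
  shows "\<forall>a. a = (\<Sum>b\<in>{b. atom le b}. int_smul (mu b a) b)"
proof -
  have refl: "\<And>a. le a a" and trans: "\<And>a b c. le a b \<Longrightarrow> le b c \<Longrightarrow> le a c"
    and antis: "\<And>a b. le a b \<Longrightarrow> le b a \<Longrightarrow> a = b"
    and ax1: "\<And>a b c. le b a \<Longrightarrow> le c a \<Longrightarrow> le (b + c) a"
    and ax2: "\<And>a b c. le a b \<Longrightarrow> le a c \<Longrightarrow> le a (a + b + c)"
    using assms(1) unfolding additive_poset_def by blast+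
  have mu1: "\<And>a. mu a a = 1" and mu0: "\<And>a b. \<not> le a b \<Longrightarrow> mu a b = 0"
    and musum: "\<And>a b. le a b \<Longrightarrow> a \<noteq> b \<Longrightarrow> (\<Sum>c\<in>{c. le a c \<and> le c b}. mu a c) = 0"
    using assms(2) unfolding is_moebius_def by blast+
  have ch: "\<forall>z::'a. z + z = 0"
  proof
    fix z :: 'a
    have "le (z+z) z" using ax1 refl by blast
    then have "le (z+z+z) z" using ax1 refl by blast
    moreover have "le z (z+z+z)" using ax2 refl by blast
    ultimately have "z+z+z = z" using antis by blast
    then show "z + z = 0" by (metis add_cancel_right_left add.assoc)
  qed
  have bot: "\<And>a. le 0 a" using ax1 refl ch by metis
  define B where "B = {b. atom le b}"
  define S where "S a = (\<Sum>b\<in>B. int_smul (mu b a) b)" for a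
  have step2: "(\<Sum>c\<in>{c. le c a}. S c) = (if atom le a then a else 0)" for a
  proof -
    have inner: "(\<Sum>c\<in>{c. le c a}. mu b c) = (if b = a then 1 else 0)" for b
    proof (cases "le b a")
      case True
      have "(\<Sum>c\<in>{c. le c a}. mu b c) = (\<Sum>c\<in>{c. le b c \<and> le c a}. mu b c)"
        by (rule sum.mono_neutral_right) (auto intro: ccontr simp: mu0)
      then show ?thesis using musum[OF True] mu1 True antis
        proof (cases "b = a")
          case True
          then have "{c. le b c \<and> le c a} = {a}" using antis refl by blast
          then show ?thesis using \<open>(\<Sum>c\<in>{c. le c a}. mu b c) = _\<close> True mu1 by simp
        qed (simp add: musum[OF True])
    next
      case False
      have "(\<Sum>c\<in>{c. le c a}. mu b c) = 0"
        by (rule sum.neutral) (metis False mem_Collect_eq mu0 trans)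
      then show ?thesis using False refl by auto
    qed
    have "(\<Sum>c\<in>{c. le c a}. S c) = (\<Sum>b\<in>B. \<Sum>c\<in>{c. le c a}. int_smul (mu b c) b)"
      unfolding S_def by (rule sum.swap)
    also have "\<dots> = (\<Sum>b\<in>B. int_smul (\<Sum>c\<in>{c. le c a}. mu b c) b)"
      by (rule sum.cong) (auto simp: int_smul_sum ch)
    also have "\<dots> = (\<Sum>b\<in>B. if b = a then b else 0)"
      by (rule sum.cong) (auto simp: inner int_smul_char2 ch)
    also have "\<dots> = (if atom le a then a else 0)"
      by (simp add: B_def)
    finally show ?thesis .
  qed
  have step3: "(\<Sum>c\<in>{c. le c a}. c) = (if atom le a then a else 0)" for a
  proof (cases "a = 0")
    case True
    then have "{c. le c a} = {0}" using antis bot by blast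
    then show ?thesis using True by (simp add: atom_def)
  next
    case a0: False
    have sub: "{0, a} \<subseteq> {c. le c a}" using bot refl by blast
    show ?thesis
    proof (cases "atom le a")
      case True
      then have "{c. le c a} = {0, a}" unfolding atom_def by blast
      then show ?thesis using True a0 by simp
    next
      case False
      then obtain y where y: "le y a" "y \<noteq> 0" "y \<noteq> a"
        using a0 sub unfolding atom_def by blast
      have fin: "finite {c. le c a}" by simp
      have p1: "(\<Sum>c\<in>{c. le c a}. c) = (if even (card {c. le c a} div 2) then 0 else a)"
        by (rule pair_sum[OF ch a0 fin]) (auto intro: ax1 refl)
      have p2: "(\<Sum>c\<in>{c. le c a}. c) = (if even (card {c. le c a} div 2) then 0 else y)"
        by (rule pair_sum[OF ch y(2) fin]) (auto intro: ax1 y(1))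
      show ?thesis using p1 p2 y False by (auto split: if_splits)
    qed
  qed
  have main: "n = card {c. le c a} \<Longrightarrow> S a = a" for n a
  proof (induction n arbitrary: a rule: less_induct)
    case (less n a)
    note n = less(2)
    have IH: "S c = c" if "le c a" "c \<noteq> a" for c
    proof -
      have "{x. le x c} \<subset> {x. le x a}" using that trans antis refl by blast
      then have "card {x. le x c} < card {x. le x a}" by (simp add: psubset_card_mono)
      then show ?thesis using less(1) n by blast
    qed
    have r1: "(\<Sum>c\<in>{c. le c a}. S c) = S a + (\<Sum>c\<in>{c. le c a} - {a}. S c)"
      using refl by (simp add: sum.remove)
    have r2: "(\<Sum>c\<in>{c. le c a}. c) = a + (\<Sum>c\<in>{c. le c a} - {a}. c)"
      using refl sum.remove[of "{c. le c a}" a "\<lambda>c. c"] by simp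
    have r3: "(\<Sum>c\<in>{c. le c a} - {a}. S c) = (\<Sum>c\<in>{c. le c a} - {a}. c)"
      by (rule sum.cong) (auto simp: IH)
    show "S a = a" using r1 r2 r3 step2[of a] step3[of a]
      by (metis add_right_cancel)
  qed
  show ?thesis using main unfolding S_def B_def by metis
qed

end
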